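(* For any $n\ge0$, $1\le k\le n+2$ and $\varepsilon\in\{0,1\}$, the inclusion $\tau_n\sqcap^{n+2}_{k,\varepsilon}\hookrightarrow\tau_n\square^{n+2}_{k,\varepsilon}$ is a comical map.
   Context: Cubical sets are presheaves on the box category $\square$ (objects $[1]^n=\{0<1\}^n$; morphisms generated by faces $\partial_{i,\varepsilon}$ inserting $\varepsilon$ in coordinate $i$, degeneracies $\sigma_i$, and max/min connections $\gamma_{i,1},\gamma_{i,0}$); a cube is degenerate if it is $x\sigma_i$ or $x\gamma_{i,\varepsilon}$; every composite of faces has a unique normal form $\partial_{k_1,\varepsilon_1}\cdots\partial_{k_t,\varepsilon_t}$ with $k_1>\dots>k_t$. A marked cubical set is a cubical set with marked cubes of positive dimension containing all degenerate cubes; maps preserve marked cubes; category $\mathsf{cSet}^+$; colimits are computed on underlying cubical sets, a cube being marked iff it is the image of a marked cube. $\tau_jX$ is $X$ with additionally all cubes of dimension $\ge j+1$ marked. For $m\ge1$, $1\le k\le m$, $\varepsilon\in\{0,1\}$: $\square^m_{k,\varepsilon}$ is $\square^m$ in which a non-degenerate positive-dimensional face in normal form is marked iff none of its factors is $\partial_{k-1,\varepsilon},\partial_{k,0},\partial_{k,1},\partial_{k+1,\varepsilon}$; $\sqcap^m_{k,\varepsilon}$ is the union of all codimension-one faces except $\partial_{k,\varepsilon}$, with the marking making it a regular subobject of $\square^m_{k,\varepsilon}$ (comical open box inclusion). For $m\ge2$, $(\square^m_{k,\varepsilon})''=\tau_{m-2}\square^m_{k,\varepsilon}$ and $(\square^m_{k,\varepsilon})'$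 is $\square^m_{k,\varepsilon}$ with all $(m-1)$-faces other than $\partial_{k,\varepsilon}$ marked (elementary comical marking extension $(\square^m_{k,\varepsilon})'\hookrightarrow(\square^m_{k,\varepsilon})''$). A map is comical if it lies in the closure of the comical open box inclusions and elementary comical marking extensions under pushouts and transfinite composition. *)

theory Defs
  imports Main
begin

text \<open>A morphism [1]^m -> [1]^n is represented by a function on bool lists which is
  meaningful on lists of length m (and returns [] on all other lists).
  Coordinates are numbered from 1.\<close>

type_synonym cmor = "bool list \<Rightarrow> bool list"

definition cid :: "nat \<Rightarrow> cmor" where
  "cid n = (\<lambda>xs. if length xs = n then xs else [])"

definition ccomp :: "nat \<Rightarrow> cmor \<Rightarrow> cmor \<Rightarrow> cmor" where
  "ccomp l g f = (\<lambda>xs. if length xs = l then g (f xs) else [])"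

definition cface :: "nat \<Rightarrow> nat \<Rightarrow> bool \<Rightarrow> cmor" where
  "cface n i e = (\<lambda>xs. if length xs = n then take (i - 1) xs @ e # drop (i - 1) xs else [])"

definition cdegen :: "nat \<Rightarrow> nat \<Rightarrow> cmor" where
  "cdegen n i = (\<lambda>xs. if length xs = Suc n then take (i - 1) xs @ drop i xs else [])"

definition cconn :: "nat \<Rightarrow> nat \<Rightarrow> bool \<Rightarrow> cmor" where
  "cconn n i e = (\<lambda>xs. if length xs = Suc n then
       take (i - 1) xs @ (if e then (xs ! (i - 1) \<or> xs ! i) else (xs ! (i - 1) \<and> xs ! i)) # drop (i + 1) xs
     else [])"

inductive boxhom :: "nat \<Rightarrow> nat \<Rightarrow> cmor \<Rightarrow> bool" where
  bh_id: "boxhom n n (cid n)"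
| bh_face: "\<lbrakk>1 \<le> i; i \<le> Suc n\<rbrakk> \<Longrightarrow> boxhom n (Suc n) (cface n i e)"
| bh_degen: "\<lbrakk>1 \<le> i; i \<le> Suc n\<rbrakk> \<Longrightarrow> boxhom (Suc n) n (cdegen n i)"
| bh_conn: "\<lbrakk>1 \<le> i; i \<le> n\<rbrakk> \<Longrightarrow> boxhom (Suc n) n (cconn n i e)"
| bh_comp: "\<lbrakk>boxhom l m f; boxhom m n g\<rbrakk> \<Longrightarrow> boxhom l n (ccomp l g f)"

text \<open>cells X n = the n-cubes; act X m n f x = x.f for f : [1]^m -> [1]^n and x an n-cube;
  marked X n = marked n-cubes.\<close>
record 'a mcset =
  cells :: "nat \<Rightarrow> 'a set"
  act :: "nat \<Rightarrow> nat \<Rightarrow> cmor \<Rightarrow> 'a \<Rightarrow> 'a"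
  marked :: "nat \<Rightarrow> 'a set"

definition is_cset :: "'a mcset \<Rightarrow> bool" where
  "is_cset X \<longleftrightarrow>
     (\<forall>m n f x. boxhom m n f \<longrightarrow> x \<in> cells X n \<longrightarrow> act X m n f x \<in> cells X m) \<and>
     (\<forall>n x. x \<in> cells X n \<longrightarrow> act X n n (cid n) x = x) \<and>
     (\<forall>l m n f g x. boxhom l m f \<longrightarrow> boxhom m n g \<longrightarrow> x \<in> cells X n \<longrightarrow>
        act X l n (ccomp l g f) x = act X l m f (act X m n g x))"

definition degenerate :: "'a mcset \<Rightarrow> nat \<Rightarrow> 'a \<Rightarrow> bool" where
  "degenerate X n x \<longleftrightarrow> (\<exists>m. n = Suc m \<and> (\<exists>y \<in> cells X m.
      (\<exists>i. 1 \<le> i \<and> i \<le> Suc m \<and> x = act X (Suc m) m (cdegen m i) y) \<or>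
      (\<exists>i e. 1 \<le> i \<and> i \<le> m \<and> x = act X (Suc m) m (cconn m i e) y)))"

definition is_mcset :: "'a mcset \<Rightarrow> bool" where
  "is_mcset X \<longleftrightarrow> is_cset X \<and> marked X 0 = {} \<and> (\<forall>n. marked X n \<subseteq> cells X n) \<and>
     (\<forall>n x. x \<in> cells X n \<longrightarrow> degenerate X n x \<longrightarrow> x \<in> marked X n)"

definition is_mmap :: "'a mcset \<Rightarrow> 'b mcset \<Rightarrow> (nat \<Rightarrow> 'a \<Rightarrow> 'b) \<Rightarrow> bool" where
  "is_mmap X Y F \<longleftrightarrow>
     (\<forall>n x. x \<in> cells X n \<longrightarrow> F n x \<in> cells Y n) \<and>
     (\<forall>n x. x \<in> marked X n \<longrightarrow> F n x \<in> marked Y n) \<and>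
     (\<forall>m n f x. boxhom m n f \<longrightarrow> x \<in> cells X n \<longrightarrow> F m (act X m n f x) = act Y m n f (F n x))"

definition mcomp :: "(nat \<Rightarrow> 'b \<Rightarrow> 'c) \<Rightarrow> (nat \<Rightarrow> 'a \<Rightarrow> 'b) \<Rightarrow> nat \<Rightarrow> 'a \<Rightarrow> 'c" where
  "mcomp G F = (\<lambda>n x. G n (F n x))"

text \<open>Equality of maps out of X (they are only meaningful on the cubes of X).\<close>
definition eq_map :: "'a mcset \<Rightarrow> (nat \<Rightarrow> 'a \<Rightarrow> 'b) \<Rightarrow> (nat \<Rightarrow> 'a \<Rightarrow> 'b) \<Rightarrow> bool" where
  "eq_map X F G \<longleftrightarrow> (\<forall>n x. x \<in> cells X n \<longrightarrow> F n x = G n x)"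

definition is_miso :: "'a mcset \<Rightarrow> 'b mcset \<Rightarrow> (nat \<Rightarrow> 'a \<Rightarrow> 'b) \<Rightarrow> bool" where
  "is_miso X Y F \<longleftrightarrow> is_mcset X \<and> is_mcset Y \<and> is_mmap X Y F \<and>
     (\<forall>n. bij_betw (F n) (cells X n) (cells Y n)) \<and>
     (\<forall>n x. x \<in> cells X n \<longrightarrow> F n x \<in> marked Y n \<longrightarrow> x \<in> marked X n)"

definition tau :: "nat \<Rightarrow> 'a mcset \<Rightarrow> 'a mcset" where
  "tau j X = X\<lparr>marked := (\<lambda>d. marked X d \<union> (if j + 1 \<le> d then cells X d else {}))\<rparr>"

definition cube_base :: "nat \<Rightarrow> cmor mcset" where
  "cube_base m = \<lparr>cells = (\<lambda>d. {x. boxhom d m x}), act = (\<lambda>p d f x. ccomp p x f),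
                  marked = (\<lambda>d. {})\<rparr>"

text \<open>facecomp d [(k1,e1),...,(kt,et)] is the composite of faces
  partial_{k1,e1} ... partial_{kt,et} : [1]^d -> [1]^(d+t).\<close>
fun facecomp :: "nat \<Rightarrow> (nat \<times> bool) list \<Rightarrow> cmor" where
  "facecomp d [] = cid d"
| "facecomp d ((k, e) # L) = ccomp d (cface (d + length L) k e) (facecomp d L)"

definition face_nf :: "nat \<Rightarrow> (nat \<times> bool) list \<Rightarrow> bool" where
  "face_nf d L \<longleftrightarrow> sorted_wrt (\<lambda>a b. fst b < fst a) L \<and>
     (\<forall>(k, e) \<in> set L. 1 \<le> k \<and> k \<le> d + length L)"

definition forbidden_factor :: "nat \<Rightarrow> bool \<Rightarrow> nat \<Rightarrow> bool \<Rightarrow> bool" where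
  "forbidden_factor k eps j e \<longleftrightarrow>
     (j + 1 = k \<and> e = eps) \<or> j = k \<or> (j = k + 1 \<and> e = eps)"

definition cube_mk :: "nat \<Rightarrow> nat \<Rightarrow> bool \<Rightarrow> cmor mcset" where
  "cube_mk m k eps = (cube_base m)\<lparr>marked := (\<lambda>d. {x. boxhom d m x \<and> 0 < d \<and>
      (degenerate (cube_base m) d x \<or>
       (\<exists>L. face_nf d L \<and> d + length L = m \<and> x = facecomp d L \<and>
            (\<forall>(j, e) \<in> set L. \<not> forbidden_factor k eps j e)))})\<rparr>"

text \<open>The comical open box: union of all codimension-one faces except partial_{k,eps},
  with the marking induced from box^m_{k,eps}.\<close>
definition obox_cells :: "nat \<Rightarrow> nat \<Rightarrow> bool \<Rightarrow> nat \<Rightarrow> cmor set" where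
  "obox_cells m k eps d = {x. boxhom d m x \<and>
      (\<exists>j e y. 1 \<le> j \<and> j \<le> m \<and> (j, e) \<noteq> (k, eps) \<and> boxhom d (m - 1) y \<and>
               x = ccomp d (cface (m - 1) j e) y)}"

definition obox :: "nat \<Rightarrow> nat \<Rightarrow> bool \<Rightarrow> cmor mcset" where
  "obox m k eps = \<lparr>cells = obox_cells m k eps, act = (\<lambda>p d f x. ccomp p x f),
      marked = (\<lambda>d. marked (cube_mk m k eps) d \<inter> obox_cells m k eps d)\<rparr>"

definition cube_mk' :: "nat \<Rightarrow> nat \<Rightarrow> bool \<Rightarrow> cmor mcset" where
  "cube_mk' m k eps = (cube_mk m k eps)\<lparr>marked := (\<lambda>d. marked (cube_mk m k eps) d \<union>
      (if d = m - 1 then cells (cube_mk m k eps) d - {cface (m - 1) k eps} else {}))\<rparr>"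

definition cube_mk'' :: "nat \<Rightarrow> nat \<Rightarrow> bool \<Rightarrow> cmor mcset" where
  "cube_mk'' m k eps = tau (m - 2) (cube_mk m k eps)"

text \<open>Pushout square  A -j-> B, A -f-> C, C -k-> D, B -g-> D.  The universal property is
  quantified over test objects whose cubes live in the type of D.\<close>
definition is_pushout :: "'a mcset \<Rightarrow> 'b mcset \<Rightarrow> 'c mcset \<Rightarrow> 'd mcset \<Rightarrow>
    (nat \<Rightarrow> 'a \<Rightarrow> 'b) \<Rightarrow> (nat \<Rightarrow> 'a \<Rightarrow> 'c) \<Rightarrow> (nat \<Rightarrow> 'c \<Rightarrow> 'd) \<Rightarrow> (nat \<Rightarrow> 'b \<Rightarrow> 'd) \<Rightarrow> bool" where
  "is_pushout A B C D j f k g \<longleftrightarrow>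
     is_mcset A \<and> is_mcset B \<and> is_mcset C \<and> is_mcset D \<and>
     is_mmap A B j \<and> is_mmap A C f \<and> is_mmap C D k \<and> is_mmap B D g \<and>
     eq_map A (mcomp g j) (mcomp k f) \<and>
     (\<forall>(E :: 'd mcset) p q. is_mcset E \<longrightarrow> is_mmap B E p \<longrightarrow> is_mmap C E q \<longrightarrow>
        eq_map A (mcomp p j) (mcomp q f) \<longrightarrow>
        (\<exists>u. is_mmap D E u \<and> eq_map B (mcomp u g) p \<and> eq_map C (mcomp u k) q \<and>
             (\<forall>u'. is_mmap D E u' \<and> eq_map B (mcomp u' g) p \<and> eq_map C (mcomp u' k) q \<longrightarrow>
                   eq_map D u u')))"

definition is_chain :: "'i rel \<Rightarrow> ('i \<Rightarrow> 'a mcset) \<Rightarrow> ('i \<Rightarrow> 'i \<Rightarrow> nat \<Rightarrow> 'a \<Rightarrow> 'a) \<Rightarrow> bool" where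
  "is_chain r Z Phi \<longleftrightarrow> Well_order r \<and>
     (\<forall>a \<in> Field r. is_mcset (Z a)) \<and>
     (\<forall>(a, b) \<in> r. is_mmap (Z a) (Z b) (Phi a b)) \<and>
     (\<forall>a \<in> Field r. eq_map (Z a) (Phi a a) (\<lambda>n x. x)) \<and>
     (\<forall>a b c. (a, b) \<in> r \<longrightarrow> (b, c) \<in> r \<longrightarrow> eq_map (Z a) (Phi a c) (mcomp (Phi b c) (Phi a b)))"

text \<open>W with cocone psi is a colimit of the restriction of the chain to J; test objects
  have cubes in the type of W.\<close>
definition is_colimit :: "'i rel \<Rightarrow> 'i set \<Rightarrow> ('i \<Rightarrow> 'a mcset) \<Rightarrow> ('i \<Rightarrow> 'i \<Rightarrow> nat \<Rightarrow> 'a \<Rightarrow> 'a) \<Rightarrow>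
    'b mcset \<Rightarrow> ('i \<Rightarrow> nat \<Rightarrow> 'a \<Rightarrow> 'b) \<Rightarrow> bool" where
  "is_colimit r J Z Phi W psi \<longleftrightarrow> is_mcset W \<and>
     (\<forall>a \<in> J. is_mmap (Z a) W (psi a)) \<and>
     (\<forall>a \<in> J. \<forall>b \<in> J. (a, b) \<in> r \<longrightarrow> eq_map (Z a) (mcomp (psi b) (Phi a b)) (psi a)) \<and>
     (\<forall>(E :: 'b mcset) chi. is_mcset E \<longrightarrow> (\<forall>a \<in> J. is_mmap (Z a) E (chi a)) \<longrightarrow>
        (\<forall>a \<in> J. \<forall>b \<in> J. (a, b) \<in> r \<longrightarrow> eq_map (Z a) (mcomp (chi b) (Phi a b)) (chi a)) \<longrightarrow>
        (\<exists>u. is_mmap W E u \<and> (\<forall>a \<in> J. eq_map (Z a) (mcomp u (psi a)) (chi a)) \<and>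
             (\<forall>u'. is_mmap W E u' \<and> (\<forall>a \<in> J. eq_map (Z a) (mcomp u' (psi a)) (chi a)) \<longrightarrow>
                   eq_map W u u')))"

definition wo_succ :: "'i rel \<Rightarrow> 'i \<Rightarrow> 'i \<Rightarrow> bool" where
  "wo_succ r a b \<longleftrightarrow> (a, b) \<in> r \<and> a \<noteq> b \<and> (\<forall>c. (a, c) \<in> r \<and> (c, b) \<in> r \<longrightarrow> c = a \<or> c = b)"

definition wo_limit :: "'i rel \<Rightarrow> 'i \<Rightarrow> bool" where
  "wo_limit r b \<longleftrightarrow> b \<in> Field r \<and> (\<exists>a. (a, b) \<in> r \<and> a \<noteq> b) \<and> \<not> (\<exists>a. wo_succ r a b)"

definition wo_least :: "'i rel \<Rightarrow> 'i \<Rightarrow> bool" where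
  "wo_least r a \<longleftrightarrow> a \<in> Field r \<and> (\<forall>b \<in> Field r. (a, b) \<in> r)"

text \<open>Closure of the comical open box inclusions and the elementary comical marking
  extensions (up to isomorphism of arrows) under pushouts and transfinite composition,
  among maps of marked cubical sets whose cubes live in the type 'a (the chains are
  indexed by well-orders on 'a).\<close>
inductive comical :: "'a mcset \<Rightarrow> 'a mcset \<Rightarrow> (nat \<Rightarrow> 'a \<Rightarrow> 'a) \<Rightarrow> bool" where
  gen_openbox:
    "\<lbrakk>1 \<le> m; 1 \<le> k; k \<le> m; is_mmap A B F;
      is_miso (obox m k eps) A u; is_miso (cube_mk m k eps) B v;
      \<forall>n x. x \<in> cells (obox m k eps) n \<longrightarrow> v n x = F n (u n x)\<rbrakk> \<Longrightarrow> comical A B F"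
| gen_marking:
    "\<lbrakk>2 \<le> m; 1 \<le> k; k \<le> m; is_mmap A B F;
      is_miso (cube_mk' m k eps) A u; is_miso (cube_mk'' m k eps) B v;
      \<forall>n x. x \<in> cells (cube_mk' m k eps) n \<longrightarrow> v n x = F n (u n x)\<rbrakk> \<Longrightarrow> comical A B F"
| pushout:
    "\<lbrakk>comical A B j; is_pushout A B C D j f k g\<rbrakk> \<Longrightarrow> comical C D k"
| transfinite:
    "\<lbrakk>is_chain (r :: 'a rel) Z Phi; wo_least r a0;
      \<forall>a b. wo_succ r a b \<longrightarrow> comical (Z a) (Z b) (Phi a b);
      \<forall>b. wo_limit r b \<longrightarrow> is_colimit r {a. (a, b) \<in> r \<and> a \<noteq> b} Z Phi (Z b) (\<lambda>a. Phi a b);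
      is_colimit r (Field r) Z Phi Y psi\<rbrakk> \<Longrightarrow> comical (Z a0) Y (psi a0)"

end

theory Submission
  imports Defs
begin


lemma boxhom_len:
  "boxhom l n f \<Longrightarrow> (\<forall>xs. length xs = l \<longrightarrow> length (f xs) = n) \<and> (\<forall>xs. length xs \<noteq> l \<longrightarrow> f xs = [])"
proof (induction rule: boxhom.induct)
  case (bh_id n) then show ?case by (simp add: cid_def)
next
  case (bh_face i n e) then show ?case by (auto simp: cface_def)
next
  case (bh_degen i n) then show ?case by (auto simp: cdegen_def)
next
  case (bh_conn i n e) then show ?case by (auto simp: cconn_def)
next
  case (bh_comp l m f n g) then show ?case by (auto simp: ccomp_def)
qed

lemma ccomp_assoc:
  assumes "\<forall>xs. length xs = l \<longrightarrow> length (f xs) = m"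
  shows "ccomp l (ccomp m g h) f = ccomp l g (ccomp l h f)"
  using assms by (auto simp: ccomp_def fun_eq_iff)

lemma ccomp_assoc_bh:
  "boxhom l m f \<Longrightarrow> ccomp l (ccomp m g h) f = ccomp l g (ccomp l h f)"
  by (rule ccomp_assoc) (use boxhom_len[of l m f] in blast)

lemma ccomp_cid_left: "boxhom l n f \<Longrightarrow> ccomp l (cid n) f = f"
  using boxhom_len[of l n f] by (auto simp: ccomp_def cid_def fun_eq_iff)

lemma ccomp_cid_right: "boxhom l n f \<Longrightarrow> ccomp l f (cid l) = f"
  using boxhom_len[of l n f] by (auto simp: ccomp_def cid_def fun_eq_iff)

definition dgen :: "nat \<Rightarrow> nat \<Rightarrow> cmor \<Rightarrow> bool" where
  "dgen l n g \<longleftrightarrow> l = Suc n \<and> ((\<exists>i. 1 \<le> i \<and> i \<le> Suc n \<and> g = cdegen n i) \<or> (\<exists>i e. 1 \<le> i \<and> i \<le> n \<and> g = cconn n i e))"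

lemma dgen_bh: "dgen l n g \<Longrightarrow> boxhom l n g"
  unfolding dgen_def
proof (elim conjE disjE exE)
  fix i assume "l = Suc n" "1 \<le> i" "i \<le> Suc n" "g = cdegen n i"
  then show "boxhom l n g" by (simp add: bh_degen)
next
  fix i e assume "l = Suc n" "1 \<le> i" "i \<le> n" "g = cconn n i e"
  then show "boxhom l n g" by (simp add: bh_conn)
qed

inductive bhn :: "nat \<Rightarrow> nat \<Rightarrow> nat \<Rightarrow> cmor \<Rightarrow> bool" where
  bhn0: "bhn 0 n n (cid n)"
| bhnF: "\<lbrakk>bhn N l m f; 1 \<le> i; i \<le> Suc m\<rbrakk> \<Longrightarrow> bhn (Suc N) l (Suc m) (ccomp l (cface m i e) f)"
| bhnD: "\<lbrakk>bhn N l m f; dgen m n g\<rbrakk> \<Longrightarrow> bhn (Suc N) l n (ccomp l g f)"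

lemma bhn_bh: "bhn N l n f \<Longrightarrow> boxhom l n f"
proof (induction rule: bhn.induct)
  case (bhnF N l m f i e)
  have "boxhom m (Suc m) (cface m i e)" using bhnF by (intro bh_face) auto
  with bhnF.IH show ?case by (rule bh_comp)
next
  case (bhn0 n) show ?case by (rule bh_id)
next
  case (bhnD N l m f n g) from bhnD.IH dgen_bh[OF bhnD.hyps(2)] show ?case by (rule bh_comp)
qed

lemma bhn_comp: "bhn N2 m n g \<Longrightarrow> bhn N1 l m f \<Longrightarrow> \<exists>N. bhn N l n (ccomp l g f)"
proof (induction arbitrary: f rule: bhn.induct)
  case (bhn0 n)
  have "ccomp l (cid n) f = f" by (rule ccomp_cid_left[OF bhn_bh[OF bhn0]])
  with bhn0.prems show ?case by (intro exI[of _ N1]) simp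
next
  case (bhnF N m' p h i e)
  from bhnF.IH[OF bhnF.prems] obtain M where M: "bhn M l p (ccomp l h f)" ..
  have "ccomp l (ccomp m' (cface p i e) h) f = ccomp l (cface p i e) (ccomp l h f)"
    by (rule ccomp_assoc_bh[OF bhn_bh[OF bhnF.prems]])
  moreover have "bhn (Suc M) l (Suc p) (ccomp l (cface p i e) (ccomp l h f))"
    using M bhnF.hyps by (intro bhn.bhnF) auto
  ultimately show ?case by (intro exI[of _ "Suc M"]) simp
next
  case (bhnD N m' p h n' g)
  from bhnD.IH[OF bhnD.prems] obtain M where M: "bhn M l p (ccomp l h f)" ..
  have "ccomp l (ccomp m' g h) f = ccomp l g (ccomp l h f)"
    by (rule ccomp_assoc_bh[OF bhn_bh[OF bhnD.prems]])
  moreover have "bhn (Suc M) l n' (ccomp l g (ccomp l h f))"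
    using M bhnD.hyps by (intro bhn.bhnD) auto
  ultimately show ?case by (intro exI[of _ "Suc M"]) simp
qed

lemma bh_bhn: "boxhom l n f \<Longrightarrow> \<exists>N. bhn N l n f"
proof (induction rule: boxhom.induct)
  case (bh_id n) then show ?case by (rule exI, rule bhn0)
next
  case (bh_face i n e)
  have "bhn 1 n (Suc n) (ccomp n (cface n i e) (cid n))" using bhnF[OF bhn0] bh_face by simp
  moreover have "ccomp n (cface n i e) (cid n) = cface n i e" by (rule ccomp_cid_right[OF boxhom.bh_face]) (use bh_face in auto)
  ultimately show ?case by auto
next
  case (bh_degen i n)
  have d: "dgen (Suc n) n (cdegen n i)" using bh_degen by (auto simp: dgen_def)
  have "bhn 1 (Suc n) n (ccomp (Suc n) (cdegen n i) (cid (Suc n)))" using bhnD[OF bhn0 d] by simp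
  moreover have "ccomp (Suc n) (cdegen n i) (cid (Suc n)) = cdegen n i" by (rule ccomp_cid_right[OF boxhom.bh_degen]) (use bh_degen in auto)
  ultimately show ?case by auto
next
  case (bh_conn i n e)
  have d: "dgen (Suc n) n (cconn n i e)" using bh_conn by (auto simp: dgen_def)
  have "bhn 1 (Suc n) n (ccomp (Suc n) (cconn n i e) (cid (Suc n)))" using bhnD[OF bhn0 d] by simp
  moreover have "ccomp (Suc n) (cconn n i e) (cid (Suc n)) = cconn n i e" by (rule ccomp_cid_right[OF boxhom.bh_conn]) (use bh_conn in auto)
  ultimately show ?case by auto
next
  case (bh_comp l m f n g) then show ?case using bhn_comp by blast
qed




lemma cface_len[simp]: "length xs = p \<Longrightarrow> length (cface p i e xs) = Suc p"
  by (auto simp: cface_def)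
lemma cface_nth: "length xs = p \<Longrightarrow> 1 \<le> i \<Longrightarrow> i \<le> Suc p \<Longrightarrow> q < Suc p \<Longrightarrow>
   cface p i e xs ! q = (if q < i - 1 then xs ! q else if q = i - 1 then e else xs ! (q - 1))"
  by (auto simp: cface_def nth_append min_def)
lemma cdegen_len[simp]: "length xs = Suc p \<Longrightarrow> 1 \<le> i \<Longrightarrow> i \<le> Suc p \<Longrightarrow> length (cdegen p i xs) = p"
  by (auto simp: cdegen_def)
lemma cdegen_nth: "length xs = Suc p \<Longrightarrow> 1 \<le> i \<Longrightarrow> i \<le> Suc p \<Longrightarrow> q < p \<Longrightarrow>
   cdegen p i xs ! q = (if q < i - 1 then xs ! q else xs ! (Suc q))"
  by (auto simp: cdegen_def nth_append min_def)
lemma cconn_len[simp]: "length xs = Suc p \<Longrightarrow> 1 \<le> i \<Longrightarrow> i \<le> p \<Longrightarrow> length (cconn p i e xs) = p"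
  by (auto simp: cconn_def)
lemma cconn_nth: "length xs = Suc p \<Longrightarrow> 1 \<le> i \<Longrightarrow> i \<le> p \<Longrightarrow> q < p \<Longrightarrow>
   cconn p i e xs ! q = (if q < i - 1 then xs ! q else if q = i - 1 then
      (if e then xs ! (i - 1) \<or> xs ! i else xs ! (i - 1) \<and> xs ! i) else xs ! (Suc q))"
  by (auto simp: cconn_def nth_append min_def nth_Cons')


lemma dgen_degen: "1 \<le> i \<Longrightarrow> i \<le> Suc n \<Longrightarrow> dgen (Suc n) n (cdegen n i)"
  unfolding dgen_def by blast
lemma dgen_conn: "1 \<le> i \<Longrightarrow> i \<le> n \<Longrightarrow> dgen (Suc n) n (cconn n i e)"
  unfolding dgen_def by blast

lemma ccomp_eqI: "(\<And>xs. length xs = p \<Longrightarrow> g (f xs) = g' (f' xs)) \<Longrightarrow> ccomp p g f = ccomp p g' f'"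
  by (auto simp: ccomp_def fun_eq_iff)
lemma ccomp_cidI: "(\<And>xs. length xs = p \<Longrightarrow> g (f xs) = xs) \<Longrightarrow> ccomp p g f = cid p"
  by (auto simp: ccomp_def cid_def fun_eq_iff)

definition GF :: "nat \<Rightarrow> cmor \<Rightarrow> bool" where
  "GF p X \<longleftrightarrow> X = cid p \<or> (\<exists>p' i' e' g'. p = Suc p' \<and> 1 \<le> i' \<and> i' \<le> Suc p' \<and> dgen p p' g' \<and>
        X = ccomp p (cface p' i' e') g')"

lemma GF_I: "p = Suc p' \<Longrightarrow> 1 \<le> i' \<Longrightarrow> i' \<le> Suc p' \<Longrightarrow> dgen p p' g' \<Longrightarrow> X = ccomp p (cface p' i' e') g' \<Longrightarrow> GF p X"
  unfolding GF_def by blast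

lemma degen_face:
  assumes "1 \<le> j" "j \<le> Suc p" "1 \<le> i" "i \<le> Suc p"
  shows "GF p (ccomp p (cdegen p j) (cface p i e))"
proof (cases "i = j")
  case True
  have "ccomp p (cdegen p j) (cface p i e) = cid p"
    by (rule ccomp_cidI, rule nth_equalityI; insert assms True; (auto simp: cdegen_nth cface_nth); linarith?)
  then show ?thesis unfolding GF_def ..
next
  case False
  then obtain p' where p: "p = Suc p'" using assms by (cases p) auto
  show ?thesis
  proof (cases "i < j")
    case True
    have d: "dgen p p' (cdegen p' (j - 1))" unfolding p by (rule dgen_degen) (use assms True p in auto)
    have "ccomp p (cdegen p j) (cface p i e) = ccomp p (cface p' i e) (cdegen p' (j - 1))"
      by (rule ccomp_eqI, rule nth_equalityI; insert assms True p; (auto simp: cdegen_nth cface_nth); linarith?)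
    then show ?thesis using d assms True p by (intro GF_I) auto
  next
    case False
    have d: "dgen p p' (cdegen p' j)" unfolding p by (rule dgen_degen) (use assms False \<open>i \<noteq> j\<close> p in auto)
    have "ccomp p (cdegen p j) (cface p i e) = ccomp p (cface p' (i - 1) e) (cdegen p' j)"
      by (rule ccomp_eqI, rule nth_equalityI; insert assms False \<open>i \<noteq> j\<close> p; (auto simp: cdegen_nth cface_nth); linarith?)
    then show ?thesis using d assms False \<open>i \<noteq> j\<close> p by (intro GF_I) auto
  qed
qed



lemma conn_face:
  assumes "1 \<le> j" "j \<le> p" "1 \<le> i" "i \<le> Suc p"
  shows "GF p (ccomp p (cconn p j c) (cface p i e))"
proof -
  obtain p' where p: "p = Suc p'" using assms by (cases p) auto
  consider "i < j" | "i > j + 1" | "i = j" "e = c" | "i = j + 1" "e = c" | "i = j" "e \<noteq> c" | "i = j + 1" "e \<noteq> c" by linarith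
  then show ?thesis
  proof cases
    case 1
    have d: "dgen p p' (cconn p' (j - 1) c)" unfolding p by (rule dgen_conn) (use assms 1 p in auto)
    have "ccomp p (cconn p j c) (cface p i e) = ccomp p (cface p' i e) (cconn p' (j - 1) c)"
      apply (rule ccomp_eqI, rule nth_equalityI; insert assms 1 p)
       apply simp
      subgoal for xs q
        by (cases "q < i - 1"; cases "q = i - 1"; cases "q < j - 1"; cases "q = j - 1"; auto simp add: cconn_nth cface_nth)
      done
    then show ?thesis using d assms 1 p by (intro GF_I) auto
  next
    case 2
    have d: "dgen p p' (cconn p' j c)" unfolding p by (rule dgen_conn) (use assms 2 p in auto)
    have "ccomp p (cconn p j c) (cface p i e) = ccomp p (cface p' (i - 1) e) (cconn p' j c)"
      apply (rule ccomp_eqI, rule nth_equalityI; insert assms 2 p)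
       apply simp
      subgoal for xs q
        by (cases "Suc q < i - 1"; cases "Suc q = i - 1"; cases "q < j - 1"; cases "q = j - 1"; simp add: cconn_nth cface_nth; (intro impI conjI allI; simp; linarith?)?)
      done
    then show ?thesis using d assms 2 p by (intro GF_I) auto
  next
    case 3
    have d: "dgen p p' (cdegen p' j)" unfolding p by (rule dgen_degen) (use assms 3 p in auto)
    have "ccomp p (cconn p j c) (cface p i e) = ccomp p (cface p' j e) (cdegen p' j)"
      apply (rule ccomp_eqI, rule nth_equalityI; insert assms 3 p)
       apply simp
      subgoal for xs q
        by (cases "q < j - 1"; cases "q = j - 1"; auto simp add: cconn_nth cface_nth cdegen_nth)
      done
    then show ?thesis using d assms 3 p by (intro GF_I) auto
  next
    case 4
    have d: "dgen p p' (cdegen p' j)" unfolding p by (rule dgen_degen) (use assms 4 p in auto)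
    have "ccomp p (cconn p j c) (cface p i e) = ccomp p (cface p' j e) (cdegen p' j)"
      apply (rule ccomp_eqI, rule nth_equalityI; insert assms 4 p)
       apply simp
      subgoal for xs q
        by (cases "q < j - 1"; cases "q = j - 1"; cases "q = j"; auto simp add: cconn_nth cface_nth cdegen_nth)
      done
    then show ?thesis using d assms 4 p by (intro GF_I) auto
  next
    case 5
    have "ccomp p (cconn p j c) (cface p i e) = cid p"
      apply (rule ccomp_cidI, rule nth_equalityI; insert assms 5)
       apply simp
      subgoal for xs q
        by (cases "q < j - 1"; cases "q = j - 1"; auto simp add: cconn_nth cface_nth)
      done
    then show ?thesis unfolding GF_def ..
  next
    case 6
    have "ccomp p (cconn p j c) (cface p i e) = cid p"
      apply (rule ccomp_cidI, rule nth_equalityI; insert assms 6)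
       apply simp
      subgoal for xs q
        by (cases "q < j - 1"; cases "q = j - 1"; cases "q = j"; auto simp add: cconn_nth cface_nth)
      done
    then show ?thesis unfolding GF_def ..
  qed
qed

lemma dgen_face:
  assumes "dgen (Suc p) p g" "1 \<le> i" "i \<le> Suc p"
  shows "GF p (ccomp p g (cface p i e))"
  using assms unfolding dgen_def
  by (auto intro: degen_face conn_face)



definition FL :: "nat \<Rightarrow> nat \<Rightarrow> nat \<Rightarrow> cmor \<Rightarrow> bool" where
  "FL N l n f \<longleftrightarrow> (\<exists>n' i e y N'. n = Suc n' \<and> 1 \<le> i \<and> i \<le> n \<and> N' < N \<and> bhn N' l n' y \<and>
      f = ccomp l (cface n' i e) y)"
definition DF :: "nat \<Rightarrow> nat \<Rightarrow> nat \<Rightarrow> cmor \<Rightarrow> bool" where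
  "DF N l n f \<longleftrightarrow> (\<exists>l' g y N'. N' < N \<and> dgen l l' g \<and> bhn N' l' n y \<and> f = ccomp l y g)"

lemma FL_mono: "FL N' l n f \<Longrightarrow> N' \<le> N \<Longrightarrow> FL N l n f"
  unfolding FL_def by (blast intro: less_le_trans)
lemma DF_mono: "DF N' l n f \<Longrightarrow> N' \<le> N \<Longrightarrow> DF N l n f"
  unfolding DF_def by (blast intro: less_le_trans)

lemma trich: "bhn N l n f \<Longrightarrow> (l = n \<and> f = cid l) \<or> FL N l n f \<or> DF N l n f"
proof (induction N arbitrary: l n f rule: less_induct)
  case (less N)
  from less.prems show ?case
  proof (cases rule: bhn.cases)
    case bhn0 then show ?thesis by simp
  next
    case (bhnF N0 m f' i e)
    have "FL N l n f" unfolding FL_def using bhnF by blast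
    then show ?thesis by simp
  next
    case (bhnD N0 m f' g)
    have gb: "boxhom m n g" using bhnD dgen_bh by blast
    have mn: "m = Suc n" using bhnD by (simp add: dgen_def)
    from less.IH[of N0 l m f'] bhnD
    have "(l = m \<and> f' = cid l) \<or> FL N0 l m f' \<or> DF N0 l m f'" by simp
    then consider "l = m" "f' = cid l" | "FL N0 l m f'" | "DF N0 l m f'" by blast
    then show ?thesis
    proof cases
      case 1
      have "f = g" using bhnD 1 ccomp_cid_right[OF gb] by simp
      also have "g = ccomp l (cid n) g" using ccomp_cid_left[OF gb] 1 by simp
      finally have "DF N l n f" unfolding DF_def using bhnD 1 bhn0[of n] by blast
      then show ?thesis by simp
    next
      case 2
      then obtain n' i e y N' where y: "m = Suc n'" "1 \<le> i" "i \<le> m" "N' < N0" "bhn N' l n' y"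
        "f' = ccomp l (cface n' i e) y" unfolding FL_def by blast
      have nn: "n' = n" using y mn by simp
      have yb: "boxhom l n y" using y nn bhn_bh by blast
      have f: "f = ccomp l (ccomp n g (cface n i e)) y"
        using bhnD y nn ccomp_assoc_bh[OF yb, of g "cface n i e"] by simp
      have "GF n (ccomp n g (cface n i e))"
        by (rule dgen_face) (use bhnD mn y nn in auto)
      then consider "ccomp n g (cface n i e) = cid n" | p' i' e' g' where "n = Suc p'" "1 \<le> i'" "i' \<le> Suc p'"
          "dgen n p' g'" "ccomp n g (cface n i e) = ccomp n (cface p' i' e') g'"
        unfolding GF_def by blast
      then show ?thesis
      proof cases
        case 1
        then have "f = y" using f ccomp_cid_left[OF yb] by simp
        from less.IH[of N' l n y] y nn bhnD
        have "(l = n \<and> y = cid l) \<or> FL N' l n y \<or> DF N' l n y" by simp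
        then show ?thesis using \<open>f = y\<close> FL_mono[of N' l n y N] DF_mono[of N' l n y N] y bhnD by auto
      next
        case 2
        have "f = ccomp l (cface p' i' e') (ccomp l g' y)"
          using f 2 ccomp_assoc_bh[OF yb, of "cface p' i' e'" g'] by simp
        moreover have "bhn (Suc N') l p' (ccomp l g' y)" using y nn 2 by (intro bhn.bhnD) auto
        ultimately have "FL N l n f" unfolding FL_def using 2 y bhnD
          by (intro exI[of _ p'] exI[of _ i'] exI[of _ e'] exI[of _ "ccomp l g' y"] exI[of _ "Suc N'"]) auto
        then show ?thesis by simp
      qed
    next
      case 3
      then obtain l' g0 y N' where y: "N' < N0" "dgen l l' g0" "bhn N' l' m y" "f' = ccomp l y g0"
        unfolding DF_def by blast
      have g0b: "boxhom l l' g0" using y dgen_bh by blast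
      have "f = ccomp l (ccomp l' g y) g0"
        using bhnD y ccomp_assoc_bh[OF g0b, of g y] by simp
      moreover have "bhn (Suc N') l' n (ccomp l' g y)" using y bhnD by (intro bhn.bhnD) auto
      ultimately have "DF N l n f" unfolding DF_def using y bhnD
        by (intro exI[of _ l'] exI[of _ g0] exI[of _ "ccomp l' g y"] exI[of _ "Suc N'"]) auto
      then show ?thesis by simp
    qed
  qed
qed

definition DFb :: "nat \<Rightarrow> nat \<Rightarrow> cmor \<Rightarrow> bool" where
  "DFb l n f \<longleftrightarrow> (\<exists>l' g y. dgen l l' g \<and> boxhom l' n y \<and> f = ccomp l y g)"

lemma DF_DFb: "DF N l n f \<Longrightarrow> DFb l n f"
  unfolding DF_def DFb_def using bhn_bh by blast

lemma DFb_face: "DFb l n y \<Longrightarrow> 1 \<le> i \<Longrightarrow> i \<le> Suc n \<Longrightarrow> DFb l (Suc n) (ccomp l (cface n i e) y)"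
proof -
  assume "DFb l n y" "1 \<le> i" "i \<le> Suc n"
  then obtain l' g y0 where y: "dgen l l' g" "boxhom l' n y0" "y = ccomp l y0 g" unfolding DFb_def by blast
  have gb: "boxhom l l' g" using y dgen_bh by blast
  have "ccomp l (cface n i e) y = ccomp l (ccomp l' (cface n i e) y0) g"
    using y ccomp_assoc_bh[OF gb, of "cface n i e" y0] by simp
  moreover have "boxhom l' (Suc n) (ccomp l' (cface n i e) y0)"
    using y(2) bh_face[OF \<open>1 \<le> i\<close> \<open>i \<le> Suc n\<close>] by (rule bh_comp)
  ultimately show ?thesis unfolding DFb_def using y by blast
qed

lemma L1n: "bhn N l n f \<Longrightarrow> n < l \<Longrightarrow> DFb l n f"
proof (induction N arbitrary: l n f rule: less_induct)
  case (less N)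
  from trich[OF less.prems(1)] less.prems(2)
  consider "FL N l n f" | "DF N l n f" by auto
  then show ?case
  proof cases
    case 1
    then obtain n' i e y N' where y: "n = Suc n'" "1 \<le> i" "i \<le> n" "N' < N" "bhn N' l n' y"
        "f = ccomp l (cface n' i e) y" unfolding FL_def by blast
    have "DFb l n' y" using less.IH[of N' l n' y] y less.prems by simp
    then show ?thesis using DFb_face[of l n' y i e] y by simp
  next
    case 2 then show ?thesis by (rule DF_DFb)
  qed
qed

lemma L1: "boxhom l n f \<Longrightarrow> n < l \<Longrightarrow> DFb l n f"
  using bh_bhn L1n by blast

lemma L2: "boxhom l l f \<Longrightarrow> f = cid l \<or> DFb l l f"
proof -
  assume "boxhom l l f"
  then obtain N where N: "bhn N l l f" using bh_bhn by blast
  from trich[OF N] consider "f = cid l" | "FL N l l f" | "DF N l l f" by auto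
  then show ?thesis
  proof cases
    case 2
    then obtain n' i e y N' where y: "l = Suc n'" "1 \<le> i" "i \<le> l" "N' < N" "bhn N' l n' y"
        "f = ccomp l (cface n' i e) y" unfolding FL_def by blast
    have "DFb l n' y" using L1n[OF y(5)] y by simp
    then show ?thesis using DFb_face[of l n' y i e] y by simp
  qed (auto intro: DF_DFb)
qed

lemma L3: "boxhom p (Suc p) x \<Longrightarrow>
   (\<exists>j e y. 1 \<le> j \<and> j \<le> Suc p \<and> boxhom p p y \<and> x = ccomp p (cface p j e) y) \<or> DFb p (Suc p) x"
proof -
  assume "boxhom p (Suc p) x"
  then obtain N where N: "bhn N p (Suc p) x" using bh_bhn by blast
  from trich[OF N] consider "FL N p (Suc p) x" | "DF N p (Suc p) x" by auto
  then show ?thesis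
  proof cases
    case 1 then show ?thesis unfolding FL_def using bhn_bh by fastforce
  qed (auto intro: DF_DFb)
qed




definition ccact :: "nat \<Rightarrow> nat \<Rightarrow> cmor \<Rightarrow> cmor \<Rightarrow> cmor" where
  "ccact = (\<lambda>p d f x. ccomp p x f)"

lemma cells_cube_mk[simp]: "cells (cube_mk m k eps) = (\<lambda>d. {x. boxhom d m x})"
  by (simp add: cube_mk_def cube_base_def)
lemma act_cube_mk[simp]: "act (cube_mk m k eps) = ccact"
  by (simp add: cube_mk_def cube_base_def ccact_def)
lemma cells_cube_base[simp]: "cells (cube_base m) = (\<lambda>d. {x. boxhom d m x})"
  by (simp add: cube_base_def)
lemma act_cube_base[simp]: "act (cube_base m) = ccact"
  by (simp add: cube_base_def ccact_def)
lemma cells_obox[simp]: "cells (obox m k eps) = obox_cells m k eps"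
  by (simp add: obox_def)
lemma act_obox[simp]: "act (obox m k eps) = ccact"
  by (simp add: obox_def ccact_def)
lemma marked_obox[simp]: "marked (obox m k eps) d = marked (cube_mk m k eps) d \<inter> obox_cells m k eps d"
  by (simp add: obox_def)
lemma cells_tau[simp]: "cells (tau j X) = cells X"
  by (simp add: tau_def)
lemma act_tau[simp]: "act (tau j X) = act X"
  by (simp add: tau_def)
lemma marked_tau[simp]: "marked (tau j X) d = marked X d \<union> (if j + 1 \<le> d then cells X d else {})"
  by (simp add: tau_def)
lemma cells_cube_mk'[simp]: "cells (cube_mk' m k eps) = (\<lambda>d. {x. boxhom d m x})"
  by (simp add: cube_mk'_def)
lemma act_cube_mk'[simp]: "act (cube_mk' m k eps) = ccact"
  by (simp add: cube_mk'_def)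
lemma marked_cube_mk'[simp]: "marked (cube_mk' m k eps) d = marked (cube_mk m k eps) d \<union>
      (if d = m - 1 then {x. boxhom d m x} - {cface (m - 1) k eps} else {})"
  by (simp add: cube_mk'_def)

lemma marked_cube_mk_sub: "x \<in> marked (cube_mk m k eps) d \<Longrightarrow> boxhom d m x \<and> 0 < d"
  by (simp add: cube_mk_def)

lemma degenerate_DFb:
  assumes "act X = ccact" "\<And>d. cells X d \<subseteq> {x. boxhom d M x}" "degenerate X d x"
  shows "DFb d M x"
proof -
  from assms(3) obtain m y where my: "d = Suc m" "y \<in> cells X m"
    "(\<exists>i. 1 \<le> i \<and> i \<le> Suc m \<and> x = act X (Suc m) m (cdegen m i) y) \<or>
      (\<exists>i e. 1 \<le> i \<and> i \<le> m \<and> x = act X (Suc m) m (cconn m i e) y)"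
    unfolding degenerate_def by blast
  have yb: "boxhom m M y" using my assms(2) by blast
  from my(3) show ?thesis
  proof (elim disjE exE conjE)
    fix i assume "1 \<le> i" "i \<le> Suc m" "x = act X (Suc m) m (cdegen m i) y"
    then show ?thesis unfolding DFb_def using my yb assms(1)
      by (intro exI[of _ m] exI[of _ "cdegen m i"] exI[of _ y]) (simp add: ccact_def dgen_degen)
  next
    fix i e assume "1 \<le> i" "i \<le> m" "x = act X (Suc m) m (cconn m i e) y"
    then show ?thesis unfolding DFb_def using my yb assms(1)
      by (intro exI[of _ m] exI[of _ "cconn m i e"] exI[of _ y]) (simp add: ccact_def dgen_conn)
  qed
qed

lemma DFb_marked: "DFb d m x \<Longrightarrow> x \<in> marked (cube_mk m k eps) d"
proof -
  assume "DFb d m x"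
  then obtain l' g y where y: "dgen d l' g" "boxhom l' m y" "x = ccomp d y g" unfolding DFb_def by blast
  have xb: "boxhom d m x" using y dgen_bh bh_comp by blast
  have d: "d = Suc l'" using y by (simp add: dgen_def)
  have "degenerate (cube_base m) d x"
    using y(1) unfolding dgen_def degenerate_def
  proof (elim conjE disjE exE)
    fix i assume "1 \<le> i" "i \<le> Suc l'" "g = cdegen l' i"
    then show "\<exists>m'. d = Suc m' \<and> (\<exists>y\<in>cells (cube_base m) m'.
       (\<exists>i. 1 \<le> i \<and> i \<le> Suc m' \<and> x = act (cube_base m) (Suc m') m' (cdegen m' i) y) \<or>
       (\<exists>i e. 1 \<le> i \<and> i \<le> m' \<and> x = act (cube_base m) (Suc m') m' (cconn m' i e) y))"
      using y d by (intro exI[of _ l']) (auto simp: ccact_def)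
  next
    fix i e assume "1 \<le> i" "i \<le> l'" "g = cconn l' i e"
    then show "\<exists>m'. d = Suc m' \<and> (\<exists>y\<in>cells (cube_base m) m'.
       (\<exists>i. 1 \<le> i \<and> i \<le> Suc m' \<and> x = act (cube_base m) (Suc m') m' (cdegen m' i) y) \<or>
       (\<exists>i e. 1 \<le> i \<and> i \<le> m' \<and> x = act (cube_base m) (Suc m') m' (cconn m' i e) y))"
      using y d by (intro exI[of _ l']) (auto simp: ccact_def)
  qed
  then show ?thesis using xb d by (simp add: cube_mk_def)
qed

lemma is_cset_cc:
  assumes "act X = ccact" "\<And>d. cells X d \<subseteq> {x. boxhom d M x}"
    "\<And>m n f x. boxhom m n f \<Longrightarrow> x \<in> cells X n \<Longrightarrow> ccomp m x f \<in> cells X m"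
  shows "is_cset X"
  unfolding is_cset_def
proof (intro conjI allI impI)
  fix m n f x assume "boxhom m n f" "x \<in> cells X n"
  then show "act X m n f x \<in> cells X m" using assms by (simp add: ccact_def)
next
  fix n x assume "x \<in> cells X n"
  then have "boxhom n M x" using assms(2) by blast
  then show "act X n n (cid n) x = x" using assms(1) ccomp_cid_right by (simp add: ccact_def)
next
  fix l m n f g x assume "boxhom l m f" "boxhom m n g" "x \<in> cells X n"
  then show "act X l n (ccomp l g f) x = act X l m f (act X m n g x)"
    using assms(1) ccomp_assoc_bh[of l m f x g] by (simp add: ccact_def)
qed

lemma is_mcset_cube_mk: "is_mcset (cube_mk m k eps)"
  unfolding is_mcset_def
proof (intro conjI allI impI)
  show "is_cset (cube_mk m k eps)" by (rule is_cset_cc[where M = m]) (auto intro: bh_comp)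
  show "marked (cube_mk m k eps) 0 = {}" by (simp add: cube_mk_def)
  fix n show "marked (cube_mk m k eps) n \<subseteq> cells (cube_mk m k eps) n" using marked_cube_mk_sub by auto
next
  fix n x assume "x \<in> cells (cube_mk m k eps) n" "degenerate (cube_mk m k eps) n x"
  then have "DFb n m x" by (intro degenerate_DFb[where X = "cube_mk m k eps"]) auto
  then show "x \<in> marked (cube_mk m k eps) n" by (rule DFb_marked)
qed

lemma obox_cells_bh: "x \<in> obox_cells m k eps d \<Longrightarrow> boxhom d m x"
  by (simp add: obox_cells_def)

lemma obox_closed: "boxhom p n f \<Longrightarrow> x \<in> obox_cells m k eps n \<Longrightarrow> ccomp p x f \<in> obox_cells m k eps p"
proof -
  assume f: "boxhom p n f" and x: "x \<in> obox_cells m k eps n"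
  then obtain j e y where y: "1 \<le> j" "j \<le> m" "(j, e) \<noteq> (k, eps)" "boxhom n (m - 1) y"
    "x = ccomp n (cface (m - 1) j e) y" unfolding obox_cells_def by blast
  have "ccomp p x f = ccomp p (cface (m - 1) j e) (ccomp p y f)"
    using y ccomp_assoc_bh[OF f] by simp
  moreover have "boxhom p (m - 1) (ccomp p y f)" using f y(4) by (rule bh_comp)
  moreover have "boxhom p m (ccomp p x f)" using f obox_cells_bh[OF x] by (rule bh_comp)
  ultimately show ?thesis unfolding obox_cells_def using y by blast
qed

lemma is_mcset_obox: "is_mcset (obox m k eps)"
  unfolding is_mcset_def
proof (intro conjI allI impI)
  show "is_cset (obox m k eps)"
    by (rule is_cset_cc[where M = m]) (auto intro: obox_closed obox_cells_bh)
  show "marked (obox m k eps) 0 = {}" by (simp add: cube_mk_def)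
  fix n show "marked (obox m k eps) n \<subseteq> cells (obox m k eps) n" by auto
next
  fix n x assume "x \<in> cells (obox m k eps) n" "degenerate (obox m k eps) n x"
  moreover then have "DFb n m x" by (intro degenerate_DFb[where X = "obox m k eps"]) (auto intro: obox_cells_bh)
  ultimately show "x \<in> marked (obox m k eps) n" using DFb_marked by auto
qed

lemma degenerate_cong: "cells X = cells Y \<Longrightarrow> act X = act Y \<Longrightarrow> degenerate X = degenerate Y"
  unfolding degenerate_def[abs_def] by simp

lemma is_mcset_same:
  assumes "is_mcset X" "cells Y = cells X" "act Y = act X" "marked Y 0 = {}"
    "\<And>n. marked X n \<subseteq> marked Y n" "\<And>n. marked Y n \<subseteq> cells Y n"
  shows "is_mcset Y"
proof -
  have "is_cset Y" using assms(1,2,3) unfolding is_mcset_def is_cset_def by simp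
  moreover have "degenerate Y = degenerate X" using assms(2,3) by (rule degenerate_cong)
  ultimately show ?thesis unfolding is_mcset_def
  proof (intro conjI allI impI)
    fix n x assume "x \<in> cells Y n" "degenerate Y n x"
    then have "x \<in> marked X n" using assms(1,2) \<open>degenerate Y = degenerate X\<close>
      unfolding is_mcset_def by auto
    then show "x \<in> marked Y n" using assms(5) by blast
  qed (use assms in auto)
qed

lemma is_mcset_tau: "is_mcset X \<Longrightarrow> is_mcset (tau j X)"
  by (rule is_mcset_same[where X = X]) (auto simp: is_mcset_def)

lemma is_mcset_cube_mk': "2 \<le> m \<Longrightarrow> is_mcset (cube_mk' m k eps)"
  by (rule is_mcset_same[where X = "cube_mk m k eps"])
     (auto simp: is_mcset_cube_mk marked_cube_mk_sub, simp add: cube_mk_def)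

lemma mmap_id:
  "(\<And>n. cells X n \<subseteq> cells Y n) \<Longrightarrow> (\<And>n. marked X n \<subseteq> marked Y n) \<Longrightarrow> act X = act Y \<Longrightarrow>
   is_mmap X Y (\<lambda>d x. x)"
  unfolding is_mmap_def by auto

lemma miso_id: "is_mcset X \<Longrightarrow> is_miso X X (\<lambda>d x. x)"
  unfolding is_miso_def by (auto intro: mmap_id simp: bij_betw_def)




lemma K_neq:
  assumes "1 \<le> j" "j \<le> Suc p" "1 \<le> k" "k \<le> Suc p" "(j, e) \<noteq> (k, eps)" "boxhom p p y"
  shows "ccomp p (cface p j e) y \<noteq> cface p k eps"
proof
  assume eq: "ccomp p (cface p j e) y = cface p k eps"
  define xs where "xs = replicate p (\<not> e)"
  have lx: "length xs = p" by (simp add: xs_def)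
  have ly: "length (y xs) = p" using boxhom_len[OF assms(6)] lx by blast
  have "ccomp p (cface p j e) y xs ! (j - 1) = e"
    using lx ly assms by (simp add: ccomp_def cface_nth)
  moreover have "cface p k eps xs ! (j - 1) \<noteq> e"
    using lx assms by (auto simp: cface_nth xs_def)
  ultimately show False using eq by simp
qed

lemma K1:
  assumes m: "m = Suc (Suc n)" and k: "1 \<le> k" "k \<le> m"
  shows "marked (tau n (obox m k eps)) d \<subseteq> marked (cube_mk' m k eps) d"
proof
  fix x assume x: "x \<in> marked (tau n (obox m k eps)) d"
  show "x \<in> marked (cube_mk' m k eps) d"
  proof (cases "x \<in> marked (cube_mk m k eps) d")
    case True then show ?thesis by simp
  next
    case False
    with x have d: "n + 1 \<le> d" and xo: "x \<in> obox_cells m k eps d" by (auto split: if_splits)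
    then obtain j e y where y: "1 \<le> j" "j \<le> m" "(j, e) \<noteq> (k, eps)" "boxhom d (m - 1) y"
      "x = ccomp d (cface (m - 1) j e) y" unfolding obox_cells_def by blast
    show ?thesis
    proof (cases "d = m - 1")
      case True
      have "x \<noteq> cface (m - 1) k eps"
        unfolding y(5) True using y k m True by (intro K_neq) auto
      then show ?thesis using True obox_cells_bh[OF xo] by simp
    next
      case False
      then have "m - 1 < d" using d m by simp
      then have "DFb d (m - 1) y" using y(4) L1 by blast
      then have "DFb d (Suc (m - 1)) x" unfolding y(5) using y m by (intro DFb_face) auto
      then have "x \<in> marked (cube_mk m k eps) d" using m DFb_marked by simp
      then show ?thesis by simp
    qed
  qed
qed

lemma step_openbox:
  assumes "1 \<le> m" "1 \<le> k" "k \<le> m"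
  shows "comical (obox m k eps) (cube_mk m k eps) (\<lambda>d x. x)"
proof (rule gen_openbox[where m = m and k = k and eps = eps and u = "\<lambda>d x. x" and v = "\<lambda>d x. x"])
  show "is_mmap (obox m k eps) (cube_mk m k eps) (\<lambda>d x. x)"
    by (rule mmap_id) (auto intro: obox_cells_bh)
qed (use assms in \<open>auto intro: miso_id is_mcset_obox is_mcset_cube_mk\<close>)

lemma step_marking:
  assumes "1 \<le> k" "k \<le> n + 2"
  shows "comical (cube_mk' (n + 2) k eps) (tau n (cube_mk (n + 2) k eps)) (\<lambda>d x. x)"
proof (rule gen_marking[where m = "n + 2" and k = k and eps = eps and u = "\<lambda>d x. x" and v = "\<lambda>d x. x"])
  show "is_mmap (cube_mk' (n + 2) k eps) (tau n (cube_mk (n + 2) k eps)) (\<lambda>d x. x)"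
    by (rule mmap_id) auto
  show "is_miso (cube_mk'' (n + 2) k eps) (tau n (cube_mk (n + 2) k eps)) (\<lambda>d x. x)"
    unfolding cube_mk''_def by simp (intro miso_id is_mcset_tau is_mcset_cube_mk)
  show "is_miso (cube_mk' (n + 2) k eps) (cube_mk' (n + 2) k eps) (\<lambda>d x. x)"
    by (intro miso_id is_mcset_cube_mk') simp
qed (use assms in auto)


lemma K2:
  assumes m: "m = Suc (Suc n)" and k: "1 \<le> k" "k \<le> m"
    and P: "is_mmap (cube_mk m k eps) E p" and Q: "is_mmap (tau n (obox m k eps)) E q"
    and pq: "eq_map (obox m k eps) p q"
  shows "is_mmap (cube_mk' m k eps) E p"
  unfolding is_mmap_def
proof (intro conjI allI impI)
  fix d x assume "x \<in> cells (cube_mk' m k eps) d"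
  then show "p d x \<in> cells E d" using P unfolding is_mmap_def by simp
next
  fix d d' f x assume "boxhom d d' f" "x \<in> cells (cube_mk' m k eps) d'"
  then show "p d (act (cube_mk' m k eps) d d' f x) = act E d d' f (p d' x)"
    using P unfolding is_mmap_def by simp
next
  fix d x assume x: "x \<in> marked (cube_mk' m k eps) d"
  have Pm: "\<And>d x. x \<in> marked (cube_mk m k eps) d \<Longrightarrow> p d x \<in> marked E d"
    using P unfolding is_mmap_def by blast
  show "p d x \<in> marked E d"
  proof (cases "x \<in> marked (cube_mk m k eps) d")
    case True then show ?thesis using Pm by blast
  next
    case False
    with x have d: "d = Suc n" and xb: "boxhom (Suc n) (Suc (Suc n)) x"
      and xne: "x \<noteq> cface (Suc n) k eps" using m by (auto split: if_splits)
    from L3[OF xb] show ?thesis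
    proof (elim disjE exE conjE)
      fix j e y assume y: "1 \<le> j" "j \<le> Suc (Suc n)" "boxhom (Suc n) (Suc n) y"
        "x = ccomp (Suc n) (cface (Suc n) j e) y"
      show ?thesis
      proof (cases "(j, e) = (k, eps)")
        case False
        then have xo: "x \<in> obox_cells m k eps d"
          unfolding obox_cells_def using y xb m d by auto
        then have "x \<in> marked (tau n (obox m k eps)) d" using d by simp
        then have "q d x \<in> marked E d" using Q unfolding is_mmap_def by blast
        moreover have "p d x = q d x" using pq xo unfolding eq_map_def by simp
        ultimately show ?thesis by simp
      next
        case True
        from L2[OF y(3)] show ?thesis
        proof
          assume "y = cid (Suc n)"
          then have "x = cface (Suc n) k eps" using y True k m
            ccomp_cid_right[OF bh_face[of k "Suc n" eps]] by simp
          with xne show ?thesis by simp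
        next
          assume "DFb (Suc n) (Suc n) y"
          then have "DFb (Suc n) (Suc (Suc n)) x" unfolding y(4) using y(1,2) by (rule DFb_face)
          then have "x \<in> marked (cube_mk m k eps) d" using DFb_marked m d by simp
          then show ?thesis using Pm by blast
        qed
      qed
    next
      assume "DFb (Suc n) (Suc (Suc n)) x"
      then have "x \<in> marked (cube_mk m k eps) d" using DFb_marked m d by simp
      then show ?thesis using Pm by blast
    qed
  qed
qed

lemma step_pushout:
  assumes "1 \<le> k" "k \<le> n + 2"
  shows "comical (tau n (obox (n + 2) k eps)) (cube_mk' (n + 2) k eps) (\<lambda>d x. x)"
proof (rule pushout[where A = "obox (n + 2) k eps" and B = "cube_mk (n + 2) k eps"
      and j = "\<lambda>d x. x" and f = "\<lambda>d x. x" and g = "\<lambda>d x. x"])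
  show "comical (obox (n + 2) k eps) (cube_mk (n + 2) k eps) (\<lambda>d x. x)"
    using assms by (intro step_openbox) auto
  let ?A = "obox (n + 2) k eps" and ?B = "cube_mk (n + 2) k eps" and ?C = "tau n (obox (n + 2) k eps)"
    and ?D = "cube_mk' (n + 2) k eps"
  have mcid: "\<And>p :: nat \<Rightarrow> cmor \<Rightarrow> cmor. mcomp p (\<lambda>d x. x) = p" by (simp add: mcomp_def)
  have mcid2: "mcomp (\<lambda>d x. x) (\<lambda>d x. x) = (\<lambda>d (x :: cmor). x)" by (simp add: mcomp_def)
  show "is_pushout ?A ?B ?C ?D (\<lambda>d x. x) (\<lambda>d x. x) (\<lambda>d x. x) (\<lambda>d x. x)"
    unfolding is_pushout_def mcid mcid2
  proof (intro conjI allI impI)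
    show "is_mcset ?A" by (rule is_mcset_obox)
    show "is_mcset ?B" by (rule is_mcset_cube_mk)
    show "is_mcset ?C" by (intro is_mcset_tau is_mcset_obox)
    show "is_mcset ?D" by (rule is_mcset_cube_mk') simp
    show "is_mmap ?A ?B (\<lambda>d x. x)" by (rule mmap_id) (auto intro: obox_cells_bh)
    show "is_mmap ?A ?C (\<lambda>d x. x)" by (rule mmap_id) auto
    show "is_mmap ?C ?D (\<lambda>d x. x)"
      by (rule mmap_id) (use K1[of "n + 2" n k eps] assms in \<open>auto intro: obox_cells_bh\<close>)
    show "is_mmap ?B ?D (\<lambda>d x. x)" by (rule mmap_id) auto
    show "eq_map ?A (\<lambda>d x. x) (\<lambda>d x. x)" by (simp add: eq_map_def)
  next
    fix E :: "cmor mcset" and p q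
    assume E: "is_mcset E" and P: "is_mmap ?B E p" and Q: "is_mmap ?C E q" and pq: "eq_map ?A p q"
    have "is_mmap ?D E p" using K2[of "n + 2" n k eps E p q] assms P Q pq by simp
    moreover have "eq_map ?B p p" by (simp add: eq_map_def)
    moreover have "eq_map ?C p q" using pq by (simp add: eq_map_def)
    moreover have "\<forall>u'. is_mmap ?D E u' \<and> eq_map ?B u' p \<and> eq_map ?C u' q \<longrightarrow> eq_map ?D p u'"
      by (simp add: eq_map_def)
    ultimately show "\<exists>u. is_mmap ?D E u \<and> eq_map ?B u p \<and> eq_map ?C u q \<and>
             (\<forall>u'. is_mmap ?D E u' \<and> eq_map ?B u' p \<and> eq_map ?C u' q \<longrightarrow> eq_map ?D u u')"
      by blast
  qed
qed




definition ix :: "nat \<Rightarrow> cmor" where "ix i = (\<lambda>_. replicate i True)"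
lemma ix_inj[simp]: "ix a = ix b \<longleftrightarrow> a = b"
proof
  assume "ix a = ix b"
  then have "length (ix a []) = length (ix b [])" by simp
  then show "a = b" by (simp add: ix_def)
qed simp
definition r3 :: "cmor rel" where "r3 = dir_image (natLeq_on 3) ix"
lemma r3_wo: "Well_order r3"
  unfolding r3_def by (rule Well_order_dir_image[OF natLeq_on_Well_order]) (simp add: inj_on_def)
lemma r3_mem: "(x, y) \<in> r3 \<longleftrightarrow> (\<exists>a b. x = ix a \<and> y = ix b \<and> a \<le> b \<and> b < 3)"
  unfolding r3_def dir_image_def by auto
lemma r3_ix[simp]: "(ix a, ix b) \<in> r3 \<longleftrightarrow> a \<le> b \<and> b < 3"
  unfolding r3_mem by (simp only: ix_inj) blast
lemma r3_field: "Field r3 = ix ` {0, 1, 2}"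
proof -
  have "Field (natLeq_on 3) = {x. x < 3}" using well_order_on_Field[OF natLeq_on_well_order_on] by simp
  moreover have "{x::nat. x < 3} = {0, 1, 2}" by auto
  ultimately show ?thesis unfolding r3_def dir_image_Field by simp
qed

lemma comp3:
  fixes X0 X1 X2 :: "cmor mcset"
  assumes c1: "comical X0 X1 (\<lambda>d x. x)" and c2: "comical X1 X2 (\<lambda>d x. x)"
    and i0: "is_mcset X0" and i1: "is_mcset X1" and i2: "is_mcset X2"
    and m01: "is_mmap X0 X1 (\<lambda>d x. x)" and m12: "is_mmap X1 X2 (\<lambda>d x. x)" and m02: "is_mmap X0 X2 (\<lambda>d x. x)"
  shows "comical X0 X2 (\<lambda>d x. x)"
proof -
  define Z where "Z = (\<lambda>a. if a = ix 0 then X0 else if a = ix (Suc 0) then X1 else X2)"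
  define Phi :: "cmor \<Rightarrow> cmor \<Rightarrow> nat \<Rightarrow> cmor \<Rightarrow> cmor" where "Phi = (\<lambda>a b d x. x)"
  define psi :: "cmor \<Rightarrow> nat \<Rightarrow> cmor \<Rightarrow> cmor" where "psi = (\<lambda>a d x. x)"
  have Z0[simp]: "Z (ix 0) = X0" and Z1[simp]: "Z (ix (Suc 0)) = X1" and Z2[simp]: "Z (ix 2) = X2"
    by (simp_all add: Z_def del: ix_inj) (simp_all add: ix_inj)
  have mid: "\<And>X :: cmor mcset. is_mmap X X (\<lambda>d x. x)" unfolding is_mmap_def by auto
  have fld: "\<And>a. a \<in> Field r3 \<longleftrightarrow> a = ix 0 \<or> a = ix (Suc 0) \<or> a = ix 2" using r3_field by auto
  have rm: "\<And>a b. (a, b) \<in> r3 \<Longrightarrow> (a = ix 0 \<and> b = ix 0) \<or> (a = ix 0 \<and> b = ix (Suc 0)) \<or> (a = ix 0 \<and> b = ix 2) \<or>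
       (a = ix (Suc 0) \<and> b = ix (Suc 0)) \<or> (a = ix (Suc 0) \<and> b = ix 2) \<or> (a = ix 2 \<and> b = ix 2)"
  proof -
    fix a b assume "(a, b) \<in> r3"
    then obtain a' b' where ab: "a = ix a'" "b = ix b'" "a' \<le> b'" "b' < 3" unfolding r3_mem by blast
    have "b' = 0 \<or> b' = Suc 0 \<or> b' = 2" using ab(4) by linarith
    moreover have "a' = 0 \<or> a' = Suc 0 \<or> a' = 2" using ab(3,4) by linarith
    ultimately show "(a = ix 0 \<and> b = ix 0) \<or> (a = ix 0 \<and> b = ix (Suc 0)) \<or> (a = ix 0 \<and> b = ix 2) \<or>
       (a = ix (Suc 0) \<and> b = ix (Suc 0)) \<or> (a = ix (Suc 0) \<and> b = ix 2) \<or> (a = ix 2 \<and> b = ix 2)"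
      using ab(1,2,3) by (elim disjE) simp_all
  qed
  have ri: "(ix 0, ix 0) \<in> r3" "(ix 0, ix (Suc 0)) \<in> r3" "(ix 0, ix 2) \<in> r3" "(ix (Suc 0), ix (Suc 0)) \<in> r3"
    "(ix (Suc 0), ix 2) \<in> r3" "(ix 2, ix 2) \<in> r3" by (simp_all only: r3_ix) simp_all
  have ne: "ix 0 \<noteq> ix (Suc 0)" "ix 0 \<noteq> ix 2" "ix (Suc 0) \<noteq> ix 2" "ix (Suc 0) \<noteq> ix 0" "ix 2 \<noteq> ix 0" "ix 2 \<noteq> ix (Suc 0)"
    by (simp_all del: ix_inj add: ix_inj)
  have chain: "is_chain r3 Z Phi"
    unfolding is_chain_def
  proof (intro conjI ballI allI impI)
    show "Well_order r3" by (rule r3_wo)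
  next
    fix a assume "a \<in> Field r3" then show "is_mcset (Z a)" using fld i0 i1 i2 by auto
  next
    fix ab assume "ab \<in> r3"
    then show "case ab of (a, b) \<Rightarrow> is_mmap (Z a) (Z b) (Phi a b)"
      using rm[of "fst ab" "snd ab"] m01 m12 m02 mid unfolding Phi_def by (cases ab) auto
  next
    fix a assume "a \<in> Field r3" then show "eq_map (Z a) (Phi a a) (\<lambda>n x. x)" by (simp add: Phi_def eq_map_def)
  next
    fix a b c show "eq_map (Z a) (Phi a c) (mcomp (Phi b c) (Phi a b))" by (simp add: Phi_def eq_map_def mcomp_def)
  qed
  have least: "wo_least r3 (ix 0)" unfolding wo_least_def using fld by auto
  have succ: "\<And>a b. wo_succ r3 a b \<Longrightarrow> (a = ix 0 \<and> b = ix (Suc 0)) \<or> (a = ix (Suc 0) \<and> b = ix 2)"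
  proof -
    fix a b assume s: "wo_succ r3 a b"
    then have ab: "(a, b) \<in> r3" "a \<noteq> b" and btw: "\<And>c. (a, c) \<in> r3 \<Longrightarrow> (c, b) \<in> r3 \<Longrightarrow> c = a \<or> c = b"
      unfolding wo_succ_def by blast+
    show "(a = ix 0 \<and> b = ix (Suc 0)) \<or> (a = ix (Suc 0) \<and> b = ix 2)"
    proof (cases "a = ix 0 \<and> b = ix 2")
      case True
      then have "ix (Suc 0) = a \<or> ix (Suc 0) = b" using btw[of "ix (Suc 0)"] by simp
      then show ?thesis using True ne by simp
    next
      case False then show ?thesis using ab rm[of a b] by auto
    qed
  qed
  have nolim: "\<And>b. \<not> wo_limit r3 b"
  proof
    fix b assume l: "wo_limit r3 b"
    then obtain a where a: "(a, b) \<in> r3" "a \<noteq> b" unfolding wo_limit_def by blast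
    then have "b = ix (Suc 0) \<or> b = ix 2" using rm[of a b] by auto
    then show False
    proof
      assume b: "b = ix (Suc 0)"
      have "wo_succ r3 (ix 0) (ix (Suc 0))" unfolding wo_succ_def
      proof (intro conjI allI impI)
        fix c assume "(ix 0, c) \<in> r3 \<and> (c, ix (Suc 0)) \<in> r3"
        then show "c = ix 0 \<or> c = ix (Suc 0)" using rm[of c "ix (Suc 0)"] by simp
      qed simp_all
      then show False using l b unfolding wo_limit_def by blast
    next
      assume b: "b = ix 2"
      have "wo_succ r3 (ix (Suc 0)) (ix 2)" unfolding wo_succ_def
      proof (intro conjI allI impI)
        fix c assume "(ix (Suc 0), c) \<in> r3 \<and> (c, ix 2) \<in> r3"
        then show "c = ix (Suc 0) \<or> c = ix 2" using rm[of "ix (Suc 0)" c] by simp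
      qed simp_all
      then show False using l b unfolding wo_limit_def by blast
    qed
  qed
  have colim: "is_colimit r3 (Field r3) Z Phi X2 psi"
    unfolding is_colimit_def
  proof (intro conjI ballI allI impI)
    show "is_mcset X2" by (rule i2)
  next
    fix a assume "a \<in> Field r3" then show "is_mmap (Z a) X2 (psi a)"
      using fld m02 m12 mid unfolding psi_def by auto
  next
    fix a b show "eq_map (Z a) (mcomp (psi b) (Phi a b)) (psi a)" by (simp add: psi_def Phi_def eq_map_def mcomp_def)
  next
    fix E :: "cmor mcset" and chi
    assume E: "is_mcset E" and chim: "\<forall>a\<in>Field r3. is_mmap (Z a) E (chi a)"
      and comp: "\<forall>a\<in>Field r3. \<forall>b\<in>Field r3. (a, b) \<in> r3 \<longrightarrow> eq_map (Z a) (mcomp (chi b) (Phi a b)) (chi a)"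
    have f2: "ix 2 \<in> Field r3" using fld by simp
    have "is_mmap X2 E (chi (ix 2))" using chim f2 by force
    moreover have "\<forall>a\<in>Field r3. eq_map (Z a) (mcomp (chi (ix 2)) (psi a)) (chi a)"
    proof
      fix a assume a: "a \<in> Field r3"
      then have "(a, ix 2) \<in> r3" using fld rm by auto
      then have "eq_map (Z a) (mcomp (chi (ix 2)) (Phi a (ix 2))) (chi a)" using comp a f2 by blast
      then show "eq_map (Z a) (mcomp (chi (ix 2)) (psi a)) (chi a)" by (simp add: Phi_def psi_def)
    qed
    moreover have "\<forall>u'. is_mmap X2 E u' \<and> (\<forall>a\<in>Field r3. eq_map (Z a) (mcomp u' (psi a)) (chi a)) \<longrightarrow>
        eq_map X2 (chi (ix 2)) u'"
    proof (intro allI impI)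
      fix u' assume "is_mmap X2 E u' \<and> (\<forall>a\<in>Field r3. eq_map (Z a) (mcomp u' (psi a)) (chi a))"
      then have "eq_map (Z (ix 2)) (mcomp u' (psi (ix 2))) (chi (ix 2))" using f2 by blast
      then show "eq_map X2 (chi (ix 2)) u'" by (simp add: eq_map_def mcomp_def psi_def)
    qed
    ultimately show "\<exists>u. is_mmap X2 E u \<and> (\<forall>a\<in>Field r3. eq_map (Z a) (mcomp u (psi a)) (chi a)) \<and>
             (\<forall>u'. is_mmap X2 E u' \<and> (\<forall>a\<in>Field r3. eq_map (Z a) (mcomp u' (psi a)) (chi a)) \<longrightarrow>
                   eq_map X2 u u')" by blast
  qed
  have sc: "\<forall>a b. wo_succ r3 a b \<longrightarrow> comical (Z a) (Z b) (Phi a b)"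
  proof (intro allI impI)
    fix a b assume "wo_succ r3 a b"
    then have "(a = ix 0 \<and> b = ix (Suc 0)) \<or> (a = ix (Suc 0) \<and> b = ix 2)" by (rule succ)
    then show "comical (Z a) (Z b) (Phi a b)" using c1 c2 unfolding Phi_def by auto
  qed
  have "comical (Z (ix 0)) X2 (psi (ix 0))"
    by (rule transfinite[OF chain least sc]) (use nolim colim in auto)
  then show ?thesis by (simp add: psi_def)
qed



theorem lemma3p7:
  fixes n k :: nat and eps :: bool
  assumes "1 \<le> k" and "k \<le> n + 2"
  shows "comical (tau n (obox (n + 2) k eps)) (tau n (cube_mk (n + 2) k eps)) (\<lambda>d x. x)"
proof (rule comp3[of _ "cube_mk' (n + 2) k eps"])
  show "comical (tau n (obox (n + 2) k eps)) (cube_mk' (n + 2) k eps) (\<lambda>d x. x)"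
    using assms by (rule step_pushout)
  show "comical (cube_mk' (n + 2) k eps) (tau n (cube_mk (n + 2) k eps)) (\<lambda>d x. x)"
    using assms by (rule step_marking)
  show "is_mcset (tau n (obox (n + 2) k eps))" by (intro is_mcset_tau is_mcset_obox)
  show "is_mcset (cube_mk' (n + 2) k eps)" by (rule is_mcset_cube_mk') simp
  show "is_mcset (tau n (cube_mk (n + 2) k eps))" by (intro is_mcset_tau is_mcset_cube_mk)
  show "is_mmap (tau n (obox (n + 2) k eps)) (cube_mk' (n + 2) k eps) (\<lambda>d x. x)"
    by (rule mmap_id) (use K1[of "n + 2" n k eps] assms in \<open>auto intro: obox_cells_bh\<close>)
  show "is_mmap (cube_mk' (n + 2) k eps) (tau n (cube_mk (n + 2) k eps)) (\<lambda>d x. x)"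
    by (rule mmap_id) auto
  show "is_mmap (tau n (obox (n + 2) k eps)) (tau n (cube_mk (n + 2) k eps)) (\<lambda>d x. x)"
    by (rule mmap_id) (auto intro: obox_cells_bh)
qed

end
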